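(* Let $p$ be a prime and $b$ an integer with $0<b\le b^{-1}<p$. Write $p=bq+r$ with $0\le r<b$ and $p=b^{-1}s+t$ with $0\le t<b^{-1}$ (division algorithm). Then $\mathrm{inv}_{1,b}$ contains $$\{x_1^{p-kb}x_2^k\mid 0\le k\le q\}\cup\{x_1^mx_2^{p-mb^{-1}}\mid 0\le m\le s\}.$$
   Context: Let $S=\mathbb{C}[x_1,x_2]$, $\zeta=e^{2\pi i/p}$, $G=\mathbb{Z}/p\mathbb{Z}=\langle\zeta\rangle$ acting on $S$ by $x_1\mapsto\zeta x_1$, $x_2\mapsto\zeta^bx_2$. $S^G_{1,b}$ is the invariant ring; a monomial $x_1^cx_2^d$ lies in it iff $c+bd\equiv0\pmod p$. $\mathrm{inv}_{1,b}$ denotes the minimal set of monomial generators of $S^G_{1,b}$ as a $\mathbb{C}$-algebra: the nonconstant invariant monomials that are not a product of two nonconstant invariant monomials. $b^{-1}$ is the unique integer $0<b^{-1}<p$ with $bb^{-1}\equiv1\pmod p$. *)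

theory Defs
  imports "HOL-Computational_Algebra.Primes"
begin

text \<open>A monomial x1^c x2^d of C[x1,x2] is represented by its exponent pair (c,d).
  The product of monomials corresponds to adding exponent pairs; (0,0) is the constant 1.\<close>

definition is_invariant :: "nat \<Rightarrow> nat \<Rightarrow> nat \<times> nat \<Rightarrow> bool" where
  "is_invariant p b m \<longleftrightarrow> (fst m + b * snd m) mod p = 0"

definition nonconst :: "nat \<times> nat \<Rightarrow> bool" where
  "nonconst m \<longleftrightarrow> m \<noteq> (0, 0)"

definition inv_gens :: "nat \<Rightarrow> nat \<Rightarrow> (nat \<times> nat) set" where
  "inv_gens p b = {m. nonconst m \<and> is_invariant p b m \<and>
     \<not> (\<exists>m1 m2. nonconst m1 \<and> nonconst m2 \<and> is_invariant p b m1 \<and> is_invariant p b m2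
              \<and> m = (fst m1 + fst m2, snd m1 + snd m2))}"

definition binv :: "nat \<Rightarrow> nat \<Rightarrow> nat" where
  "binv p b = (THE x. 0 < x \<and> x < p \<and> (b * x) mod p = 1 mod p)"

end

theory Submission
  imports Defs "HOL-Number_Theory.Cong"
begin

lemma binv_props:
  fixes p b :: nat
  assumes "prime p" "0 < b" "b < p"
  shows "0 < binv p b \<and> binv p b < p \<and> (b * binv p b) mod p = 1"
proof -
  have p1: "1 < p" using assms(1) prime_gt_1_nat by blast
  have cop: "coprime b p"
    using assms by (metis coprime_commute dvd_imp_le not_le prime_imp_coprime_nat)
  obtain x where x: "[b * x = Suc 0] (mod p)" using cong_solve_coprime_nat[OF cop] by blast
  define y where "y = x mod p"
  have y: "(b * y) mod p = 1 mod p" using x p1 unfolding y_def cong_def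
    by (metis mod_mult_right_eq One_nat_def)
  have ypos: "0 < y" using y p1 by (metis mult_0_right mod_0 mod_less zero_neq_one less_nat_zero_code neq0_conv)
  have ylt: "y < p" using p1 unfolding y_def by simp
  have uniq: "z = y" if "0 < z \<and> z < p \<and> (b * z) mod p = 1 mod p" for z
  proof -
    have "[b * z = b * y] (mod p)" using that y unfolding cong_def by simp
    then have "[z = y] (mod p)" using cong_mult_lcancel_nat[OF cop] by blast
    then show ?thesis using that ylt cong_less_modulus_unique_nat by blast
  qed
  have "binv p b = y"
    unfolding binv_def
    apply (rule the_equality)
    using ypos ylt y uniq by blast+
  then show ?thesis using ypos ylt y p1 by simp
qed

lemma weight_ge:
  fixes p :: nat
  assumes "w mod p = 0" "0 < w"
  shows "p \<le> w"
  using assms by (metis dvd_imp_le mod_0_imp_dvd)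

theorem lemma3p7:
  fixes p b :: nat
  assumes "prime p" and "0 < b" and "b \<le> binv p b" and "binv p b < p"
  shows "{(p - k * b, k) | k. k \<le> p div b}
           \<union> {(m, p - m * binv p b) | m. m \<le> p div binv p b}
         \<subseteq> inv_gens p b"
proof -
  define c where "c = binv p b"
  have bp: "b < p" using assms by simp
  have cp: "0 < c" "c < p" "(b * c) mod p = 1" using binv_props[OF assms(1,2) bp] c_def by auto
  have p0: "0 < p" using assms(1) prime_gt_0_nat by blast
  have p1: "1 < p" using assms(1) prime_gt_1_nat by blast
  have W1: "p \<le> fst m + b * snd m" if "nonconst m" "is_invariant p b m" for m
    using that assms(2) unfolding nonconst_def is_invariant_def
    by (intro weight_ge) (auto simp: prod_eq_iff)
  have W2: "p \<le> c * fst m + snd m" if "nonconst m" "is_invariant p b m" for m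
  proof -
    have "[fst m + b * snd m = 0] (mod p)" using that unfolding is_invariant_def cong_def by simp
    then have "[c * (fst m + b * snd m) = c * 0] (mod p)" by (rule cong_mult[OF cong_refl])
    moreover have "[c * fst m + (b * c) * snd m = c * fst m + 1 * snd m] (mod p)"
      using cp(3) p1 by (intro cong_add cong_refl cong_mult) (simp add: cong_def)
    ultimately have "[c * fst m + snd m = 0] (mod p)"
      by (simp add: algebra_simps cong_def)
    then show ?thesis using that cp(1) unfolding nonconst_def
      by (intro weight_ge) (auto simp: cong_def prod_eq_iff)
  qed
  show ?thesis
  proof
    fix m assume "m \<in> {(p - k * b, k) | k. k \<le> p div b}
           \<union> {(m, p - m * binv p b) | m. m \<le> p div binv p b}"
    then consider k where "m = (p - k * b, k)" "k \<le> p div b"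
      | i where "m = (i, p - i * c)" "i \<le> p div c" unfolding c_def by blast
    then show "m \<in> inv_gens p b"
    proof cases
      case 1
      have kb: "k * b \<le> p" using 1(2) by (metis div_times_less_eq_dividend le_trans mult_le_mono1)
      have w: "fst m + b * snd m = p" using 1 kb by simp
      have nc: "nonconst m" using 1 p0 kb unfolding nonconst_def by (cases k) auto
      have inv: "is_invariant p b m" unfolding is_invariant_def using w by simp
      show ?thesis unfolding inv_gens_def
      proof (intro CollectI conjI nc inv notI)
        assume "\<exists>m1 m2. nonconst m1 \<and> nonconst m2 \<and> is_invariant p b m1 \<and> is_invariant p b m2
              \<and> m = (fst m1 + fst m2, snd m1 + snd m2)"
        then obtain m1 m2 where h: "nonconst m1" "nonconst m2" "is_invariant p b m1" "is_invariant p b m2"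
           "m = (fst m1 + fst m2, snd m1 + snd m2)" by blast
        have "p \<le> fst m1 + b * snd m1" "p \<le> fst m2 + b * snd m2" using W1 h by auto
        moreover have "fst m + b * snd m = (fst m1 + b * snd m1) + (fst m2 + b * snd m2)"
          using h(5) by (simp add: algebra_simps)
        ultimately show False using w p0 by linarith
      qed
    next
      case 2
      have ic: "i * c \<le> p" using 2(2) by (metis div_times_less_eq_dividend le_trans mult_le_mono1)
      have w: "c * fst m + snd m = p" using 2 ic by (simp add: mult.commute)
      have nc: "nonconst m" using 2 p0 ic unfolding nonconst_def by auto
      have "[i + b * (p - i * c) = 0] (mod p)"
      proof -
        have "[i + b * (p - i * c) + i * (b * c) = i + b * p] (mod p)"
        proof -
          obtain e where e: "p = i * c + e" using ic le_Suc_ex by blast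
          show ?thesis unfolding e by (simp add: algebra_simps)
        qed
        moreover have "[i + b * (p - i * c) + i * (b * c) = i + b * (p - i * c) + i * 1] (mod p)"
          using cp(3) p1 by (intro cong_add cong_refl cong_mult) (simp add: cong_def)
        moreover have "[i + b * p = i + 0] (mod p)" by (simp add: cong_def)
        ultimately have "[i + b * (p - i * c) + i = i + 0] (mod p)"
          by (metis cong_sym cong_trans mult_1_right)
        then show ?thesis using cong_add_rcancel_nat by (metis add.commute add_0)
      qed
      then have inv: "is_invariant p b m" unfolding is_invariant_def cong_def using 2 by simp
      show ?thesis unfolding inv_gens_def
      proof (intro CollectI conjI nc inv notI)
        assume "\<exists>m1 m2. nonconst m1 \<and> nonconst m2 \<and> is_invariant p b m1 \<and> is_invariant p b m2
              \<and> m = (fst m1 + fst m2, snd m1 + snd m2)"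
        then obtain m1 m2 where h: "nonconst m1" "nonconst m2" "is_invariant p b m1" "is_invariant p b m2"
           "m = (fst m1 + fst m2, snd m1 + snd m2)" by blast
        have "p \<le> c * fst m1 + snd m1" "p \<le> c * fst m2 + snd m2" using W2 h by auto
        moreover have "c * fst m + snd m = (c * fst m1 + snd m1) + (c * fst m2 + snd m2)"
          using h(5) by (simp add: algebra_simps)
        ultimately show False using w p0 by linarith
      qed
    qed
  qed
qed

end
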